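(* Let $T$ be a well-formed trace satisfying the initial-write property. Then $\mathcal{P}(T) \subseteq \mathcal{P}_{PWR}(T)$; that is, every predictable data race pair $(e,f)$ of $T$ is a potential Lockset-PWR data race pair or a potential Lockset-PWR WRD data race pair of $T$.
   Context: Traces. A trace $T$ is a finite sequence of pairwise distinct events. Each event $e$ belongs to a thread $\mathrm{tid}(e)$ and is one of: a read $r(x)$ or write $w(x)$ of a shared variable $x$, or an acquire $acq(y)$ or release $rel(y)$ of a lock $y$. $\mathrm{pos}_T(e)$ is the index of $e$ in $T$. The projection of $T$ onto thread $i$ is the subsequence of events of thread $i$. $T$ is well-formed if a thread only acquires a lock not currently held and every release $rel(y)$ in thread $i$ has a matching earlier acquire $acq(y)$ in thread $i$ with no other acquire on $y$ in between. A critical section $CS$ on lock $y$ consists of a matching acquire/release pair $acq(CS)$, $rel(CS)$ in thread $i$ together with the events of thread $i$ between them; we write $e \in CS$. The lockset $LS(e)$ of an event $e$ is the set of locks $y$ such that $e$ belongs to some critical section on $y$. Two events are conflicting if they are reads/writes on the same variable, at least one is a write, and they belong to different threads. For a read $e$ on $x$, a write $f$ on $x$ is the last write of $e$ w.r.t. $T$ if $f$ precedes $e$ in $T$ and no other write on $x$ lies strictly between them. $T$ satisfies the initial-write property if every read on $x$ is preceded in $T$ by some write on $x$. Correct reordering. $T'$ is a correctly reordered prefix of $T$ if $T'$ is a sequence of some of the events of $T$ such that: (i) for every thread $i$, the projection of $T'$ onto $i$ is a prefix of the projection of $T$ onto $i$; (ii) for every read $e$ in $T'$ whose last write w.r.t.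 $T$ is $f$, $f$ is in $T'$ and is also the last write of $e$ w.r.t. $T'$; (iii) for any two acquires $e_1,e_2$ on the same lock with $e_1$ before $e_2$ in $T'$, the matching release of $e_1$ is in $T'$ and lies strictly between $e_1$ and $e_2$. Predictable races. $(e,f)$ is a predictable data race pair of $T$ if $e,f$ are conflicting events of $T$ and there is a correctly reordered prefix $T'$ of $T$ in which $e$ appears immediately before $f$; if both are writes we additionally require $\mathrm{pos}_T(e)<\mathrm{pos}_T(f)$. $\mathcal{P}(T)$ denotes the set of all such pairs. PWR relation. $<^{PWR}$ is the smallest strict partial order on the events of $T$ such that: (PO) if $\mathrm{tid}(e)=\mathrm{tid}(f)$ and $\mathrm{pos}_T(e)<\mathrm{pos}_T(f)$ then $e<^{PWR}f$; (WRD) if the write $w$ is the last write w.r.t. $T$ of the read $r$ then $w<^{PWR}r$; (ROD) if $CS, CS'$ are distinct critical sections on the same lock, $e\in CS$, $f\in CS'$ and $e<^{PWR}f$, then $rel(CS)<^{PWR}f$. Potential pairs. $(e,f)$ is a potential Lockset-PWR data race pair if $e,f$ are conflicting, $LS(e)\cap LS(f)=\emptyset$, neither $e<^{PWR}f$ nor $f<^{PWR}e$, and either both are writes or $e$ is a read and $f$ a write. $(e,f)$ is a potential Lockset-PWR WRD data race pair if $e,f$ are conflicting, $e$ is a write, $f$ is a read, $LS(e)\cap LS(f)=\emptyset$, $e<^{PWR}f$, and there is no event $g$ with $e<^{PWR}g<^{PWR}f$. $\mathcal{P}_{PWR}(T)$ is the set of all pairs of either kind. *)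

theory Defs
  imports Main "HOL-Library.Sublist"
begin

(* Threads, shared variables and locks are identified by natural numbers.
   Each event carries a unique identifier so that a trace can contain
   several events with the same thread and operation. *)
datatype op = Rd nat | Wr nat | Acq nat | Rel nat

datatype event = Ev (eid: nat) (tid: nat) (act: op)

type_synonym trace = "event list"

definition pos :: "trace \<Rightarrow> event \<Rightarrow> nat" where
  "pos T e = (THE i. i < length T \<and> T ! i = e)"

definition before :: "trace \<Rightarrow> event \<Rightarrow> event \<Rightarrow> bool" where
  "before T e f \<longleftrightarrow> e \<in> set T \<and> f \<in> set T \<and> pos T e < pos T f"

definition strictly_between :: "trace \<Rightarrow> event \<Rightarrow> event \<Rightarrow> event \<Rightarrow> bool" where
  "strictly_between T a m b \<longleftrightarrow> before T a m \<and> before T m b"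

definition is_read :: "event \<Rightarrow> bool" where
  "is_read e \<longleftrightarrow> (\<exists>x. act e = Rd x)"

definition is_write :: "event \<Rightarrow> bool" where
  "is_write e \<longleftrightarrow> (\<exists>x. act e = Wr x)"

definition accesses :: "event \<Rightarrow> nat \<Rightarrow> bool" where
  "accesses e x \<longleftrightarrow> act e = Rd x \<or> act e = Wr x"

definition matches :: "trace \<Rightarrow> event \<Rightarrow> event \<Rightarrow> bool" where
  "matches T a r \<longleftrightarrow> (\<exists>y. act a = Acq y \<and> act r = Rel y \<and> tid a = tid r \<and> before T a r \<and>
      (\<forall>m. strictly_between T a m r \<longrightarrow> act m \<noteq> Acq y \<and> act m \<noteq> Rel y))"

definition held :: "trace \<Rightarrow> nat \<Rightarrow> event \<Rightarrow> bool" where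
  "held T y k \<longleftrightarrow> (\<exists>a. act a = Acq y \<and> before T a k \<and>
      (\<forall>m. strictly_between T a m k \<longrightarrow> act m \<noteq> Rel y))"

definition well_formed :: "trace \<Rightarrow> bool" where
  "well_formed T \<longleftrightarrow> distinct T \<and>
     (\<forall>k \<in> set T. \<forall>y. act k = Acq y \<longrightarrow> \<not> held T y k) \<and>
     (\<forall>r \<in> set T. \<forall>y. act r = Rel y \<longrightarrow> (\<exists>a. matches T a r))"

definition in_CS :: "trace \<Rightarrow> event \<Rightarrow> event \<Rightarrow> event \<Rightarrow> bool" where
  "in_CS T a r e \<longleftrightarrow> matches T a r \<and> e \<in> set T \<and> tid e = tid a \<and>
      \<not> before T e a \<and> \<not> before T r e"

definition lockset :: "trace \<Rightarrow> event \<Rightarrow> nat set" where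
  "lockset T e = {y. \<exists>a r. in_CS T a r e \<and> act a = Acq y}"

definition conflicting :: "event \<Rightarrow> event \<Rightarrow> bool" where
  "conflicting e f \<longleftrightarrow> (\<exists>x. accesses e x \<and> accesses f x) \<and> (is_write e \<or> is_write f)
      \<and> tid e \<noteq> tid f"

definition last_write :: "trace \<Rightarrow> event \<Rightarrow> event \<Rightarrow> bool" where
  "last_write T e f \<longleftrightarrow> (\<exists>x. act e = Rd x \<and> act f = Wr x \<and> before T f e \<and>
      (\<forall>g. strictly_between T f g e \<longrightarrow> act g \<noteq> Wr x))"

definition initial_write :: "trace \<Rightarrow> bool" where
  "initial_write T \<longleftrightarrow> (\<forall>e \<in> set T. \<forall>x. act e = Rd x \<longrightarrow> (\<exists>f. act f = Wr x \<and> before T f e))"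

definition correctly_reordered_prefix :: "trace \<Rightarrow> trace \<Rightarrow> bool" where
  "correctly_reordered_prefix T' T \<longleftrightarrow>
     distinct T' \<and> set T' \<subseteq> set T \<and>
     (\<forall>i. prefix (filter (\<lambda>e. tid e = i) T') (filter (\<lambda>e. tid e = i) T)) \<and>
     (\<forall>e \<in> set T'. \<forall>f. last_write T e f \<longrightarrow> f \<in> set T' \<and> last_write T' e f) \<and>
     (\<forall>e1 e2 y. e1 \<in> set T' \<longrightarrow> e2 \<in> set T' \<longrightarrow> act e1 = Acq y \<longrightarrow> act e2 = Acq y \<longrightarrow>
        before T' e1 e2 \<longrightarrow> (\<exists>r. matches T e1 r \<and> before T' e1 r \<and> before T' r e2))"

definition predictable_race :: "trace \<Rightarrow> event \<Rightarrow> event \<Rightarrow> bool" where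
  "predictable_race T e f \<longleftrightarrow> e \<in> set T \<and> f \<in> set T \<and> conflicting e f \<and>
     (\<exists>T' i. correctly_reordered_prefix T' T \<and> Suc i < length T' \<and> T' ! i = e \<and> T' ! Suc i = f) \<and>
     (is_write e \<and> is_write f \<longrightarrow> pos T e < pos T f)"

definition P :: "trace \<Rightarrow> (event \<times> event) set" where
  "P T = {(e, f). predictable_race T e f}"

inductive pwr :: "trace \<Rightarrow> event \<Rightarrow> event \<Rightarrow> bool" for T where
  PO: "e \<in> set T \<Longrightarrow> f \<in> set T \<Longrightarrow> tid e = tid f \<Longrightarrow> pos T e < pos T f \<Longrightarrow> pwr T e f"
| WRD: "last_write T r w \<Longrightarrow> pwr T w r"
| ROD: "matches T a r \<Longrightarrow> matches T a' r' \<Longrightarrow> (a, r) \<noteq> (a', r') \<Longrightarrow> act a = act a' \<Longrightarrow>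
        in_CS T a r e \<Longrightarrow> in_CS T a' r' f \<Longrightarrow> pwr T e f \<Longrightarrow> pwr T r f"
| trans: "pwr T e g \<Longrightarrow> pwr T g f \<Longrightarrow> pwr T e f"

definition potential_pwr :: "trace \<Rightarrow> event \<Rightarrow> event \<Rightarrow> bool" where
  "potential_pwr T e f \<longleftrightarrow> conflicting e f \<and> lockset T e \<inter> lockset T f = {} \<and>
     \<not> pwr T e f \<and> \<not> pwr T f e \<and>
     ((is_write e \<and> is_write f) \<or> (is_read e \<and> is_write f))"

definition potential_pwr_wrd :: "trace \<Rightarrow> event \<Rightarrow> event \<Rightarrow> bool" where
  "potential_pwr_wrd T e f \<longleftrightarrow> conflicting e f \<and> is_write e \<and> is_read f \<and>
     lockset T e \<inter> lockset T f = {} \<and> pwr T e f \<and> \<not> (\<exists>g. pwr T e g \<and> pwr T g f)"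

definition P_PWR :: "trace \<Rightarrow> (event \<times> event) set" where
  "P_PWR T = {(e, f). potential_pwr T e f \<or> potential_pwr_wrd T e f}"

end

theory Submission
  imports Defs
begin

abbreviation crp where "crp \<equiv> correctly_reordered_prefix"

lemma pos_nth: "distinct L \<Longrightarrow> k < length L \<Longrightarrow> pos L (L!k) = k"
  unfolding pos_def by (rule the_equality) (auto simp: nth_eq_iff_index_eq)

lemma pos_set: "distinct L \<Longrightarrow> a \<in> set L \<Longrightarrow> pos L a < length L \<and> L!(pos L a) = a"
  by (metis in_set_conv_nth pos_nth)

lemma before_total: "distinct L \<Longrightarrow> a \<in> set L \<Longrightarrow> b \<in> set L \<Longrightarrow> a \<noteq> b \<Longrightarrow> before L a b \<or> before L b a"
  unfolding before_def by (metis linorder_neqE_nat pos_set)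

lemma before_irrefl: "\<not> before L a a"
  unfolding before_def by auto

lemma before_asym: "before L a b \<Longrightarrow> \<not> before L b a"
  unfolding before_def by auto

lemma before_trans: "before L a b \<Longrightarrow> before L b c \<Longrightarrow> before L a c"
  unfolding before_def by auto

lemma before_of_split:
  assumes "distinct L" "L = xs @ a # ys @ b # zs"
  shows "before L a b"
proof -
  have 1: "L ! length xs = a" using assms(2) by simp
  have 2: "L ! (length xs + Suc (length ys)) = b" using assms(2) by (simp add: nth_append)
  have l: "length L = length xs + Suc (length ys) + Suc (length zs)" using assms(2) by simp
  have "pos L a = length xs" using pos_nth[OF assms(1), of "length xs"] 1 l by simp
  moreover have "pos L b = length xs + Suc (length ys)" using pos_nth[OF assms(1), of "length xs + Suc (length ys)"] 2 l by simp
  ultimately show ?thesis unfolding before_def using assms(2) by auto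
qed

lemma before_split:
  assumes "distinct L" "before L a b"
  shows "\<exists>xs ys zs. L = xs @ a # ys @ b # zs"
proof -
  have a: "a \<in> set L" and b: "b \<in> set L" using assms(2) by (auto simp: before_def)
  obtain xs rest where L: "L = xs @ a # rest" using a split_list by metis
  have pa: "pos L a = length xs" using pos_nth[OF assms(1), of "length xs"] L by simp
  have "b \<in> set rest"
  proof (rule ccontr)
    assume "b \<notin> set rest"
    then have "b \<in> set xs \<or> b = a" using b L by auto
    then show False
    proof
      assume "b \<in> set xs"
      then obtain k where k: "k < length xs" "xs ! k = b" by (metis in_set_conv_nth)
      then have "L ! k = b" using L by (simp add: nth_append)
      then have "pos L b = k" using pos_nth[OF assms(1), of k] k L by simp
      then show False using assms(2) pa k unfolding before_def by simp
    next
      assume "b = a" then show False using assms(2) before_irrefl by metis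
    qed
  qed
  then obtain ys zs where "rest = ys @ b # zs" using split_list by metis
  then show ?thesis using L by auto
qed

lemma before_filter:
  assumes "distinct L" "before L a b" "Q a" "Q b"
  shows "before (filter Q L) a b"
proof -
  obtain xs ys zs where "L = xs @ a # ys @ b # zs" using before_split assms by metis
  then have "filter Q L = filter Q xs @ a # filter Q ys @ b # filter Q zs" using assms by simp
  then show ?thesis using before_of_split assms(1) distinct_filter by metis
qed

lemma before_prefix:
  assumes "distinct L2" "prefix L1 L2" "before L1 a b"
  shows "before L2 a b"
proof -
  obtain zs where L2: "L2 = L1 @ zs" using assms(2) prefixE by metis
  then have "distinct L1" using assms(1) by simp
  then obtain xs ys ws where "L1 = xs @ a # ys @ b # ws" using before_split assms by metis
  then have "L2 = xs @ a # ys @ b # (ws @ zs)" using L2 by simp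
  then show ?thesis using before_of_split assms(1) by metis
qed


lemma TO1:
  assumes c: "crp T' T" and d: "distinct T" and t: "tid e1 = tid e2"
    and b: "before T e1 e2" and e2: "e2 \<in> set T'"
  shows "e1 \<in> set T' \<and> before T' e1 e2"
proof -
  let ?Q = "\<lambda>e. tid e = tid e2"
  have pf: "prefix (filter ?Q T') (filter ?Q T)" using c unfolding correctly_reordered_prefix_def by blast
  have dT': "distinct T'" using c unfolding correctly_reordered_prefix_def by blast
  have dF: "distinct (filter ?Q T)" using d by simp
  have bF: "before (filter ?Q T) e1 e2" using before_filter[OF d b] t by simp
  obtain xs ys zs where F: "filter ?Q T = xs @ e1 # ys @ e2 # zs" using before_split[OF dF bF] by metis
  have e2F: "e2 \<in> set (filter ?Q T')" using e2 by simp
  have "e1 \<in> set (filter ?Q T')"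
  proof -
    from pf F have "prefix (filter ?Q T') xs \<or> (\<exists>us. filter ?Q T' = xs @ us \<and> prefix us (e1 # ys @ e2 # zs))"
      by (simp add: prefix_append)
    then show ?thesis
    proof
      assume "prefix (filter ?Q T') xs"
      then have "e2 \<in> set xs" using e2F set_mono_prefix by blast
      then show ?thesis using dF F by simp
    next
      assume "\<exists>us. filter ?Q T' = xs @ us \<and> prefix us (e1 # ys @ e2 # zs)"
      then obtain us where us: "filter ?Q T' = xs @ us" "prefix us (e1 # ys @ e2 # zs)" by blast
      have "e2 \<notin> set xs" using dF F by simp
      then have "us \<noteq> []" using us e2F by auto
      then obtain u us' where "us = u # us'" by (cases us) auto
      then have "u = e1" using us(2) by simp
      then show ?thesis using us \<open>us = u # us'\<close> by simp
    qed
  qed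
  then have e1T': "e1 \<in> set T'" by simp
  have "before T' e1 e2"
  proof (rule ccontr)
    assume nb: "\<not> before T' e1 e2"
    have "e1 \<noteq> e2" using b before_irrefl by metis
    then have "before T' e2 e1" using before_total[OF dT' e1T' e2] nb by blast
    then have "before (filter ?Q T') e2 e1" using before_filter[OF dT'] t by simp
    then have "before (filter ?Q T) e2 e1" using before_prefix[OF dF pf] by blast
    then show False using bF before_asym by metis
  qed
  then show ?thesis using e1T' by blast
qed

lemma matches_facts: "matches T a r \<Longrightarrow> a \<in> set T \<and> r \<in> set T \<and> tid a = tid r \<and> before T a r \<and>
   (\<exists>y. act a = Acq y \<and> act r = Rel y)"
  unfolding matches_def before_def by auto

lemma matches_unique:
  assumes d: "distinct T" and m1: "matches T a r1" and m2: "matches T a r2"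
  shows "r1 = r2"
proof (rule ccontr)
  assume ne: "r1 \<noteq> r2"
  obtain y where y: "act a = Acq y" "act r1 = Rel y" "\<forall>m. strictly_between T a m r1 \<longrightarrow> act m \<noteq> Acq y \<and> act m \<noteq> Rel y"
    using m1 unfolding matches_def by auto
  obtain y2 where y2: "act a = Acq y2" "act r2 = Rel y2" "\<forall>m. strictly_between T a m r2 \<longrightarrow> act m \<noteq> Acq y2 \<and> act m \<noteq> Rel y2"
    using m2 unfolding matches_def by auto
  have yy: "y2 = y" using y y2 by simp
  have "before T r1 r2 \<or> before T r2 r1" using before_total[OF d] matches_facts[OF m1] matches_facts[OF m2] ne by blast
  then show False
  proof
    assume "before T r1 r2"
    then have "strictly_between T a r1 r2" using matches_facts[OF m1] unfolding strictly_between_def by blast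
    then show False using y2 y yy by auto
  next
    assume "before T r2 r1"
    then have "strictly_between T a r2 r1" using matches_facts[OF m2] unfolding strictly_between_def by blast
    then show False using y2 y yy by auto
  qed
qed

lemma in_CS_facts: "in_CS T a r x \<Longrightarrow> matches T a r \<and> x \<in> set T \<and> tid x = tid a \<and> \<not> before T x a \<and> \<not> before T r x"
  unfolding in_CS_def by auto

lemma before_or_eq:
  assumes "distinct T" "x \<in> set T" "a \<in> set T" "\<not> before T x a" "x \<noteq> a"
  shows "before T a x"
  using before_total[OF assms(1) assms(3) assms(2)] assms(4,5) by blast

lemma crp_distinct: "crp T' T \<Longrightarrow> distinct T'"
  unfolding correctly_reordered_prefix_def by blast

lemma crp_lock: "crp T' T \<Longrightarrow> e1 \<in> set T' \<Longrightarrow> e2 \<in> set T' \<Longrightarrow> act e1 = Acq y \<Longrightarrow> act e2 = Acq y \<Longrightarrow>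
        before T' e1 e2 \<Longrightarrow> (\<exists>r. matches T e1 r \<and> before T' e1 r \<and> before T' r e2)"
  unfolding correctly_reordered_prefix_def by blast

lemma crp_lw: "crp T' T \<Longrightarrow> e \<in> set T' \<Longrightarrow> last_write T e f \<Longrightarrow> f \<in> set T' \<and> last_write T' e f"
  unfolding correctly_reordered_prefix_def by blast

lemma before_set: "before L a b \<Longrightarrow> a \<in> set L \<and> b \<in> set L"
  unfolding before_def by auto

lemma lemmaA:
  assumes "pwr T a b" "crp T' T" "distinct T" "b \<in> set T'"
  shows "a \<in> set T' \<and> before T' a b"
  using assms
proof (induction rule: pwr.induct)
  case (PO e f)
  then show ?case using TO1 before_def by metis
next
  case (WRD r w)
  then show ?case using crp_lw last_write_def by metis
next
  case (ROD a r a' r' e f)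
  have dT': "distinct T'" using ROD crp_distinct by metis
  have IH: "e \<in> set T' \<and> before T' e f" using ROD.IH ROD.prems by blast
  note ca = in_CS_facts[OF ROD(5)] and ca' = in_CS_facts[OF ROD(6)]
  note ma = matches_facts[OF ROD(1)] and ma' = matches_facts[OF ROD(2)]
  obtain y where y: "act a = Acq y" "act a' = Acq y" using ma ROD(4) by auto
  have aT': "a \<in> set T' \<and> (a = e \<or> before T' a e)"
  proof (cases "a = e")
    case True then show ?thesis using IH by simp
  next
    case False
    then have "before T a e" using before_or_eq[OF ROD.prems(2)] ca ma by metis
    then show ?thesis using TO1[OF ROD.prems(1,2)] ca IH by metis
  qed
  have aT'': "a' \<in> set T' \<and> (a' = f \<or> before T' a' f)"
  proof (cases "a' = f")
    case True then show ?thesis using ROD.prems(3) by simp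
  next
    case False
    then have "before T a' f" using before_or_eq[OF ROD.prems(2)] ca' ma' by metis
    then show ?thesis using TO1[OF ROD.prems(1,2)] ca' ROD.prems(3) by metis
  qed
  have ne: "a \<noteq> a'" using matches_unique[OF ROD.prems(2)] ROD(1,2,3) by metis
  have "before T' a a' \<or> before T' a' a" using before_total[OF dT'] aT' aT'' ne by blast
  then show ?case
  proof
    assume "before T' a a'"
    then obtain r0 where r0: "matches T a r0" "before T' a r0" "before T' r0 a'"
      using crp_lock[OF ROD.prems(1)] aT' aT'' y by metis
    have "r0 = r" using matches_unique[OF ROD.prems(2) r0(1) ROD(1)] .
    then show ?thesis using r0 aT'' before_trans before_set by metis
  next
    assume "before T' a' a"
    then obtain r0 where r0: "matches T a' r0" "before T' a' r0" "before T' r0 a"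
      using crp_lock[OF ROD.prems(1)] aT' aT'' y by metis
    have rr: "r0 = r'" using matches_unique[OF ROD.prems(2) r0(1) ROD(2)] .
    have bf: "before T' r' f" using r0 rr aT' IH before_trans by metis
    have "f \<noteq> r'" using bf before_irrefl by metis
    then have "before T f r'" using before_or_eq[OF ROD.prems(2)] ca' ma' by metis
    then have "before T' f r'" using TO1[OF ROD.prems(1,2)] ca' ma' r0 rr before_set by metis
    then show ?thesis using bf before_asym by metis
  qed
next
  case (trans e g f)
  then show ?case using before_trans by metis
qed


lemma trunc_pos1:
  assumes d: "distinct (take i L @ [f])" "distinct L" and il: "i \<le> length L"
    and a: "a \<in> set (take i L @ [f])" "a \<noteq> f"
  shows "pos (take i L @ [f]) a < i \<and> a \<in> set L \<and> pos L a = pos (take i L @ [f]) a"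
proof -
  let ?L = "take i L @ [f]"
  have p: "pos ?L a < length ?L" "?L ! pos ?L a = a" using pos_set[OF d(1) a(1)] by auto
  have len: "length ?L = Suc i" using il by simp
  have "pos ?L a \<noteq> i" using p len a(2) il by (auto simp: nth_append)
  then have lt: "pos ?L a < i" using p len by simp
  then have "L ! pos ?L a = a" using p il by (simp add: nth_append)
  moreover have lt2: "pos ?L a < length L" using lt il by simp
  ultimately have "a \<in> set L" using nth_mem by metis
  moreover have "pos L a = pos ?L a" using pos_nth[OF d(2) lt2] \<open>L ! pos ?L a = a\<close> by simp
  ultimately show ?thesis using lt by blast
qed

lemma trunc_pos2:
  assumes d: "distinct (take i L @ [f])" "distinct L" and il: "i \<le> length L"
    and a: "a \<in> set L" "pos L a < i"
  shows "a \<in> set (take i L @ [f]) \<and> pos (take i L @ [f]) a = pos L a"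
proof -
  let ?L = "take i L @ [f]"
  have p: "L ! pos L a = a" using pos_set[OF d(2) a(1)] by auto
  have "?L ! pos L a = a" using p a(2) il by (simp add: nth_append)
  moreover have "pos L a < length ?L" using a(2) il by simp
  ultimately show ?thesis using pos_nth[OF d(1), of "pos L a"] nth_mem[of "pos L a" ?L] by simp
qed

lemma trunc_before:
  assumes d: "distinct (take i L @ [f])" "distinct L" and il: "i \<le> length L"
    and b: "b \<in> set (take i L @ [f])" "b \<noteq> f"
  shows "before (take i L @ [f]) a b \<longleftrightarrow> before L a b"
proof
  let ?L = "take i L @ [f]"
  note pb = trunc_pos1[OF d il b]
  assume "before ?L a b"
  then have aL: "a \<in> set ?L" and lt: "pos ?L a < pos ?L b" unfolding before_def by auto
  have "a \<noteq> f"
  proof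
    assume "a = f"
    then have "pos ?L a = i" using pos_nth[OF d(1), of i] il by (simp add: nth_append)
    then show False using lt pb by simp
  qed
  then show "before L a b" using trunc_pos1[OF d il aL] pb lt unfolding before_def by auto
next
  let ?L = "take i L @ [f]"
  note pb = trunc_pos1[OF d il b]
  assume "before L a b"
  then have aL: "a \<in> set L" and lt: "pos L a < pos L b" unfolding before_def by auto
  have "pos L a < i" using lt pb by simp
  then have "a \<in> set ?L \<and> pos ?L a = pos L a" using trunc_pos2[OF d il aL] by blast
  then show "before ?L a b" using pb b lt unfolding before_def by simp
qed


lemma trunc_crp:
  assumes c: "crp T' T" and il: "Suc i < length T'" and e: "T' ! i = e" and f: "T' ! Suc i = f"
    and fw: "is_write f" and te: "tid e \<noteq> tid f"
  shows "crp (take i T' @ [f]) T \<and> f \<in> set (take i T' @ [f]) \<and> e \<notin> set (take i T' @ [f])"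
proof -
  let ?L = "take i T' @ [f]"
  have dT': "distinct T'" using c crp_distinct by metis
  have fnot: "f \<notin> set (take i T')"
  proof
    assume "f \<in> set (take i T')"
    then obtain k where "k < length (take i T')" "take i T' ! k = f" by (metis in_set_conv_nth)
    then have ki: "k < i" "T' ! k = T' ! Suc i" using il f by auto
    then have "k = Suc i" using dT' il nth_eq_iff_index_eq[OF dT', of k "Suc i"] by simp
    then show False using ki by simp
  qed
  have enot: "e \<notin> set (take i T')"
  proof
    assume "e \<in> set (take i T')"
    then obtain k where "k < length (take i T')" "take i T' ! k = e" by (metis in_set_conv_nth)
    then have ki: "k < i" "T' ! k = T' ! i" using il e by auto
    then have "k = i" using dT' il nth_eq_iff_index_eq[OF dT', of k i] by simp
    then show False using ki by simp
  qed
  have d: "distinct ?L" using fnot dT' by simp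
  have il': "i \<le> length T'" using il by simp
  have fT': "f \<in> set T'" using f il by (metis nth_mem)
  have ef: "e \<noteq> f" using te by auto
  have eL: "e \<notin> set ?L" using enot ef by simp
  have split: "T' = take i T' @ [e, f] @ drop (Suc (Suc i)) T'"
  proof -
    have "T' = take i T' @ drop i T'" by simp
    moreover have "drop i T' = e # drop (Suc i) T'" using Cons_nth_drop_Suc[of i T'] e il by simp
    moreover have "drop (Suc i) T' = f # drop (Suc (Suc i)) T'" using Cons_nth_drop_Suc[of "Suc i" T'] f il by simp
    ultimately show ?thesis by simp
  qed
  have pre: "\<And>t. prefix (filter (\<lambda>x. tid x = t) ?L) (filter (\<lambda>x. tid x = t) T')"
  proof -
    fix t
    let ?Q = "\<lambda>x. tid x = t"
    have "filter ?Q T' = filter ?Q (take i T') @ filter ?Q [e, f] @ filter ?Q (drop (Suc (Suc i)) T')"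
      using split by (metis filter_append)
    moreover have L: "filter ?Q ?L = filter ?Q (take i T') @ filter ?Q [f]" by simp
    moreover have "filter ?Q [f] = filter ?Q [e, f] \<or> filter ?Q [f] = []" using te by auto
    ultimately show "prefix (filter ?Q ?L) (filter ?Q T')"
    proof (elim disjE)
      assume h: "filter ?Q [f] = filter ?Q [e, f]"
      show ?thesis unfolding L h \<open>filter ?Q T' = _\<close> append.assoc[symmetric] by (rule prefixI) (rule refl)
    next
      assume h: "filter ?Q [f] = []"
      show ?thesis unfolding L h \<open>filter ?Q T' = _\<close> by simp
    qed
  qed
  have C3: "\<forall>i. prefix (filter (\<lambda>e. tid e = i) ?L) (filter (\<lambda>e. tid e = i) T)"
    using pre c unfolding correctly_reordered_prefix_def by (meson prefix_order.trans)
  have C2: "set ?L \<subseteq> set T" using c fT' unfolding correctly_reordered_prefix_def by (auto dest: in_set_takeD)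
  have C4: "\<forall>e' \<in> set ?L. \<forall>w. last_write T e' w \<longrightarrow> w \<in> set ?L \<and> last_write ?L e' w"
  proof (intro ballI allI impI)
    fix e' w assume e'L: "e' \<in> set ?L" and lw: "last_write T e' w"
    obtain x where x: "act e' = Rd x" using lw unfolding last_write_def by auto
    have e'f: "e' \<noteq> f" using fw x unfolding is_write_def by auto
    note pe = trunc_pos1[OF d dT' il' e'L e'f]
    have lw': "w \<in> set T' \<and> last_write T' e' w" using crp_lw[OF c] pe lw by blast
    then obtain x' where lw2: "act e' = Rd x'" "act w = Wr x'" "before T' w e'"
      "\<forall>g. strictly_between T' w g e' \<longrightarrow> act g \<noteq> Wr x'" unfolding last_write_def by blast
    have b1: "before ?L w e'" using trunc_before[OF d dT' il' e'L e'f] lw2 by blast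
    have "\<forall>g. strictly_between ?L w g e' \<longrightarrow> act g \<noteq> Wr x'"
    proof (intro allI impI)
      fix g assume sb: "strictly_between ?L w g e'"
      then have bg: "before ?L g e'" "before ?L w g" unfolding strictly_between_def by auto
      have gL: "g \<in> set ?L" using bg before_set by metis
      have gf: "g \<noteq> f"
      proof
        assume "g = f"
        then have "pos ?L g = i" using pos_nth[OF d, of i] il' by (simp add: nth_append)
        then show False using bg(1) pe unfolding before_def by simp
      qed
      have "before T' g e'" "before T' w g" using bg trunc_before[OF d dT' il'] e'L e'f gL gf by blast+
      then show "act g \<noteq> Wr x'" using lw2 unfolding strictly_between_def by blast
    qed
    then have "last_write ?L e' w" using lw2 b1 unfolding last_write_def by blast
    then show "w \<in> set ?L \<and> last_write ?L e' w" using b1 before_set by metis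
  qed
  have C5: "\<forall>e1 e2 y. e1 \<in> set ?L \<longrightarrow> e2 \<in> set ?L \<longrightarrow> act e1 = Acq y \<longrightarrow> act e2 = Acq y \<longrightarrow>
        before ?L e1 e2 \<longrightarrow> (\<exists>r. matches T e1 r \<and> before ?L e1 r \<and> before ?L r e2)"
  proof (intro allI impI)
    fix e1 e2 y assume e1: "e1 \<in> set ?L" and e2: "e2 \<in> set ?L" and a1: "act e1 = Acq y" and a2: "act e2 = Acq y"
      and b: "before ?L e1 e2"
    have e1f: "e1 \<noteq> f" and e2f: "e2 \<noteq> f" using fw a1 a2 unfolding is_write_def by auto
    have b': "before T' e1 e2" using trunc_before[OF d dT' il' e2 e2f] b by blast
    have "e1 \<in> set T'" "e2 \<in> set T'" using trunc_pos1[OF d dT' il'] e1 e2 e1f e2f by blast+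
    then obtain r where r: "matches T e1 r" "before T' e1 r" "before T' r e2" using crp_lock[OF c] a1 a2 b' by metis
    have rL: "before ?L r e2" using trunc_before[OF d dT' il' e2 e2f] r by blast
    then have rL2: "r \<in> set ?L" using before_set by metis
    have "r \<noteq> f" using matches_facts[OF r(1)] fw unfolding is_write_def by auto
    then have "before ?L e1 r" using trunc_before[OF d dT' il' rL2] r by blast
    then show "\<exists>r. matches T e1 r \<and> before ?L e1 r \<and> before ?L r e2" using r rL by blast
  qed
  have "crp ?L T" unfolding correctly_reordered_prefix_def using d C2 C3 C4 C5 by blast
  then show ?thesis using eL by simp
qed


lemma adj:
  assumes d: "distinct T'" and il: "Suc i < length T'" and e: "T' ! i = e" and f: "T' ! Suc i = f"
  shows "pos T' e = i" "pos T' f = Suc i" "e \<in> set T'" "f \<in> set T'" "before T' e f"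
    "\<not> (before T' e g \<and> before T' g f)"
proof -
  show pe: "pos T' e = i" using pos_nth[OF d, of i] il e by simp
  show pf: "pos T' f = Suc i" using pos_nth[OF d, of "Suc i"] il f by simp
  show eT: "e \<in> set T'" using e il by (metis Suc_lessD nth_mem)
  show fT: "f \<in> set T'" using f il by (metis nth_mem)
  show "before T' e f" using pe pf eT fT unfolding before_def by simp
  show "\<not> (before T' e g \<and> before T' g f)" using pe pf unfolding before_def by auto
qed

lemma lw_exists:
  assumes d: "distinct T" and iw: "initial_write T" and fT: "f \<in> set T" and fx: "act f = Rd x"
  shows "\<exists>w. last_write T f w"
proof -
  let ?S = "{w. w \<in> set T \<and> act w = Wr x \<and> before T w f}"
  obtain w0 where "act w0 = Wr x" "before T w0 f" using iw fT fx unfolding initial_write_def by blast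
  then have ne: "?S \<noteq> {}" using before_set by blast
  have fin: "finite ?S" by (rule finite_subset[of _ "set T"]) auto
  let ?m = "Max (pos T ` ?S)"
  have "?m \<in> pos T ` ?S" using ne fin by (intro Max_in) auto
  then obtain w where w1: "w \<in> ?S" and w2: "?m = pos T w" by (rule imageE)
  have w: "w \<in> ?S" "pos T w = ?m" using w1 w2 by simp_all
  have "\<forall>g. strictly_between T w g f \<longrightarrow> act g \<noteq> Wr x"
  proof (intro allI impI)
    fix g assume sb: "strictly_between T w g f"
    show "act g \<noteq> Wr x"
    proof
      assume "act g = Wr x"
      then have "g \<in> ?S" using sb before_set unfolding strictly_between_def by blast
      then have "pos T g \<le> ?m" using fin by (intro Max_ge) auto
      moreover have "pos T w < pos T g" using sb unfolding strictly_between_def before_def by blast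
      ultimately show False using w(2) by linarith
    qed
  qed
  then have "last_write T f w" using w fx unfolding last_write_def by blast
  then show ?thesis by blast
qed

lemma lockset_disj:
  assumes c: "crp T' T" and dT: "distinct T" and il: "Suc i < length T'" and e: "T' ! i = e" and f: "T' ! Suc i = f"
    and te: "tid e \<noteq> tid f" and ae: "\<And>y. act e \<noteq> Acq y \<and> act e \<noteq> Rel y"
    and af: "\<And>y. act f \<noteq> Acq y \<and> act f \<noteq> Rel y"
  shows "lockset T e \<inter> lockset T f = {}"
proof (rule ccontr)
  assume "lockset T e \<inter> lockset T f \<noteq> {}"
  then obtain y a r a2 r2 where cs1: "in_CS T a r e" "act a = Acq y" and cs2: "in_CS T a2 r2 f" "act a2 = Acq y"
    unfolding lockset_def by blast
  have dT': "distinct T'" using c crp_distinct by metis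
  note A = adj[OF dT' il e f]
  note c1 = in_CS_facts[OF cs1(1)] and c2 = in_CS_facts[OF cs2(1)]
  have mt1: "matches T a r" and eT: "e \<in> set T" and t1: "tid e = tid a" and n1: "\<not> before T e a" and n1': "\<not> before T r e"
    using c1 by auto
  have mt2: "matches T a2 r2" and fT: "f \<in> set T" and t2: "tid f = tid a2" and n2: "\<not> before T f a2" and n2': "\<not> before T r2 f"
    using c2 by auto
  note m1 = matches_facts[OF mt1] and m2 = matches_facts[OF mt2]
  have ea: "e \<noteq> a" using ae cs1(2) by metis
  have fa: "f \<noteq> a2" using af cs2(2) by metis
  have "before T a e" using before_or_eq[OF dT eT _ n1 ea] m1 by blast
  then have a1: "a \<in> set T' \<and> before T' a e" using TO1[OF c dT t1[symmetric] _ A(3)] by blast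
  have "before T a2 f" using before_or_eq[OF dT fT _ n2 fa] m2 by blast
  then have a2: "a2 \<in> set T' \<and> before T' a2 f" using TO1[OF c dT t2[symmetric] _ A(4)] by blast
  have "a \<noteq> a2" using t1 t2 te by auto
  then have "before T' a a2 \<or> before T' a2 a" using before_total[OF dT'] a1 a2 by blast
  then show False
  proof
    assume "before T' a a2"
    then obtain r0 where r0: "matches T a r0" "before T' a r0" "before T' r0 a2"
      using crp_lock[OF c, of a a2 y] a1 a2 cs1(2) cs2(2) by blast
    have rr: "r0 = r" using matches_unique[OF dT r0(1) mt1] .
    have rT': "r \<in> set T'" using r0(2) rr before_set by metis
    have "e \<noteq> r" using ae m1 by metis
    then have "before T e r" using before_or_eq[OF dT _ eT n1'] m1 by metis
    then have "before T' e r" using TO1[OF c dT _ _ rT'] t1 m1 by metis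
    moreover have "before T' r f" using r0(3) rr a2 before_trans by metis
    ultimately show False using A(6) by blast
  next
    assume "before T' a2 a"
    then obtain r0 where r0: "matches T a2 r0" "before T' a2 r0" "before T' r0 a"
      using crp_lock[OF c, of a2 a y] a1 a2 cs1(2) cs2(2) by blast
    have rr: "r0 = r2" using matches_unique[OF dT r0(1) mt2] .
    have rT': "r2 \<in> set T'" using r0(2) rr before_set by metis
    have "f \<noteq> r2" using af m2 by metis
    then have "before T f r2" using before_or_eq[OF dT _ fT n2'] m2 by metis
    then have "before T' f r2" using TO1[OF c dT _ _ rT'] t2 m2 by metis
    moreover have "before T' r2 e" using r0(3) rr a1 before_trans by metis
    ultimately have "before T' f e" using before_trans by metis
    then show False using A(5) before_asym by metis
  qed
qed


theorem mainTheorem1: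
  assumes "well_formed T" and "initial_write T"
  shows "P T \<subseteq> P_PWR T"
proof
  fix p assume "p \<in> P T"
  then obtain e f where p: "p = (e, f)" and pr: "predictable_race T e f" unfolding P_def by blast
  have dT: "distinct T" using assms(1) unfolding well_formed_def by blast
  from pr have eT: "e \<in> set T" and fT: "f \<in> set T" and cf: "conflicting e f"
    unfolding predictable_race_def by blast+
  from pr obtain T' i where c: "crp T' T" and il: "Suc i < length T'" and e: "T' ! i = e" and f: "T' ! Suc i = f"
    unfolding predictable_race_def by blast
  have dT': "distinct T'" using c crp_distinct by metis
  note A = adj[OF dT' il e f]
  from cf obtain x where ex: "accesses e x" and fx: "accesses f x" and wr: "is_write e \<or> is_write f"
    and te: "tid e \<noteq> tid f" unfolding conflicting_def by blast
  have ae: "\<And>y. act e \<noteq> Acq y \<and> act e \<noteq> Rel y" using ex unfolding accesses_def by auto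
  have af: "\<And>y. act f \<noteq> Acq y \<and> act f \<noteq> Rel y" using fx unfolding accesses_def by auto
  have LS: "lockset T e \<inter> lockset T f = {}" using lockset_disj[OF c dT il e f te ae af] .
  show "p \<in> P_PWR T"
  proof (cases "is_write f")
    case True
    have kinds: "(is_write e \<and> is_write f) \<or> (is_read e \<and> is_write f)"
      using True ex unfolding accesses_def is_write_def is_read_def by auto
    have n1: "\<not> pwr T f e"
    proof
      assume "pwr T f e"
      then have "before T' f e" using lemmaA[OF _ c dT A(3)] by blast
      then show False using A(5) before_asym by metis
    qed
    have n2: "\<not> pwr T e f"
    proof
      assume h: "pwr T e f"
      have tc: "crp (take i T' @ [f]) T \<and> f \<in> set (take i T' @ [f]) \<and> e \<notin> set (take i T' @ [f])"
        using trunc_crp[OF c il e f True te] .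
      then show False using lemmaA[OF h, of "take i T' @ [f]"] dT by blast
    qed
    have "potential_pwr T e f" unfolding potential_pwr_def using cf LS n1 n2 kinds by blast
    then show ?thesis using p unfolding P_PWR_def by blast
  next
    case False
    then have we: "is_write e" using wr by blast
    have fr: "act f = Rd x" using False fx unfolding accesses_def is_write_def by auto
    have ew: "act e = Wr x" using we ex unfolding accesses_def is_write_def by auto
    have isr: "is_read f" using fr unfolding is_read_def by blast
    obtain w where lw: "last_write T f w" using lw_exists[OF dT assms(2) fT fr] by blast
    have lw': "w \<in> set T' \<and> last_write T' f w" using crp_lw[OF c A(4) lw] .
    then have wx: "act w = Wr x" and bwf: "before T' w f"
      and nb: "\<forall>g. strictly_between T' w g f \<longrightarrow> act g \<noteq> Wr x"
      using fr unfolding last_write_def by auto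
    have "w = e"
    proof (rule ccontr)
      assume ne: "w \<noteq> e"
      then have "before T' w e \<or> before T' e w" using before_total[OF dT'] lw' A(3) by blast
      then show False
      proof
        assume "before T' w e"
        then have "strictly_between T' w e f" using A(5) unfolding strictly_between_def by blast
        then show False using nb ew by blast
      next
        assume "before T' e w"
        then show False using A(6)[of w] bwf by blast
      qed
    qed
    then have pw: "pwr T e f" using lw pwr.WRD by metis
    have ng: "\<not> (\<exists>g. pwr T e g \<and> pwr T g f)"
    proof
      assume "\<exists>g. pwr T e g \<and> pwr T g f"
      then obtain g where g1: "pwr T e g" and g2: "pwr T g f" by blast
      have gT: "g \<in> set T' \<and> before T' g f" using lemmaA[OF g2 c dT A(4)] .
      have "before T' e g" using lemmaA[OF g1 c dT] gT by blast
      then show False using A(6)[of g] gT by blast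
    qed
    have "potential_pwr_wrd T e f" unfolding potential_pwr_wrd_def using cf we isr LS pw ng by blast
    then show ?thesis using p unfolding P_PWR_def by blast
  qed
qed

end
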